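(* Let $R>0$ and $q>0$ be fixed, and for $M\ge2$ let $\tau_M=\frac{R}{q\ln M}$. Define $$\mathcal{E}(\tau)=\mathbb{E}\left[\frac{e^{U_1/\sqrt{\tau}}}{e^{U_1/\sqrt\tau}+e^{-1/\tau}\sum_{j=2}^Me^{U_j/\sqrt\tau}}\right],$$ with $U_1,\dots,U_M$ i.i.d. $\mathcal{N}(0,1)$. Then $\lim_{M\to\infty}\mathcal{E}(\tau_M)=1$ if $q>2R$ and $\lim_{M\to\infty}\mathcal{E}(\tau_M)=0$ if $q<2R$. (In the spatially coupled state evolution, $q=\frac{1}{L_R}\sum_{r=1}^{L_R}W_{rc}/\phi^t_r$.)
   Context: In spatially coupled SPARC state evolution, $\tau^t_c=\frac{R}{\ln M}\big[\frac{1}{L_R}\sum_r\frac{W_{rc}}{\phi^t_r}\big]^{-1}$ for a base matrix $W\in\mathbb{R}^{L_R\times L_C}$ with nonnegative entries and positive numbers $\phi^t_r$; $R$ is the rate in nats. *)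

theory Defs
  imports "HOL-Probability.Probability"
begin

definition gauss_iid :: "nat \<Rightarrow> (nat \<Rightarrow> real) measure" where
  "gauss_iid M = PiM {1..M} (\<lambda>_. density lborel std_normal_density)"

definition sparc_E :: "nat \<Rightarrow> real \<Rightarrow> real" where
  "sparc_E M \<tau> = (\<integral>U. exp (U 1 / sqrt \<tau>) /
      (exp (U 1 / sqrt \<tau>) + exp (- 1 / \<tau>) * (\<Sum>j=2..M. exp (U j / sqrt \<tau>))) \<partial>gauss_iid M)"

end

theory Submission
  imports Defs
begin


abbreviation G :: "real measure" where "G \<equiv> density lborel std_normal_density"

lemma mgf_density_eq:
  "std_normal_density u * exp (l * u) = exp (l\<^sup>2 / 2) * normal_density l 1 u"
proof -
  have "exp (- u\<^sup>2 / 2) * exp (l * u) = exp (l\<^sup>2 / 2) * exp (- (u - l)\<^sup>2 / 2)"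
    unfolding exp_add[symmetric] by (simp add: power2_eq_square field_simps)
  then show ?thesis unfolding std_normal_density_def normal_density_def by simp
qed

lemma mgf_integrable: "integrable G (\<lambda>u. exp (l * u))"
  apply (subst integrable_density)
  apply (auto simp: mgf_density_eq)
  done

lemma mgf_integral: "(\<integral>u. exp (l * u) \<partial>G) = exp (l\<^sup>2 / 2)"
  apply (subst integral_density)
  apply (auto simp: mgf_density_eq)
  done




lemma prob_G': "prob_space G"
  using prob_space_normal_density by simp

lemma sets_G[simp, measurable_cong]: "sets G = sets borel" by simp

lemma prob_N: "prob_space (gauss_iid M)"
  unfolding gauss_iid_def by (rule prob_space_PiM) (rule prob_G')

lemma marg:
  fixes g :: "real \<Rightarrow> real"
  assumes j: "j \<in> {1..M}" and g[measurable]: "g \<in> borel_measurable borel"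
  shows "integrable (gauss_iid M) (\<lambda>x. g (x j)) \<longleftrightarrow> integrable G g"
    and "(\<integral>x. g (x j) \<partial>gauss_iid M) = (\<integral>u. g u \<partial>G)"
proof -
  have D: "distr (gauss_iid M) G (\<lambda>\<omega>. \<omega> j) = G"
    unfolding gauss_iid_def by (rule distr_PiM_component[OF prob_G' j])
  have m: "(\<lambda>\<omega>. \<omega> j) \<in> measurable (gauss_iid M) G"
    unfolding gauss_iid_def using j by simp
  have g': "g \<in> borel_measurable G" by simp
  show "integrable (gauss_iid M) (\<lambda>x. g (x j)) \<longleftrightarrow> integrable G g"
    using integrable_distr_eq[OF m g'] D by simp
  show "(\<integral>x. g (x j) \<partial>gauss_iid M) = (\<integral>u. g u \<partial>G)"
    using integral_distr[OF m g'] D by simp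
qed

lemma pair:
  fixes g h :: "real \<Rightarrow> real"
  assumes j: "j \<in> {1..M}" and k: "k \<in> {1..M}" and jk: "j \<noteq> k"
    and ig: "integrable G g" and ih: "integrable G h"
  shows "integrable (gauss_iid M) (\<lambda>x. g (x j) * h (x k))"
    and "(\<integral>x. g (x j) * h (x k) \<partial>gauss_iid M) = (\<integral>u. g u \<partial>G) * (\<integral>u. h u \<partial>G)"
proof -
  interpret P: product_prob_space "\<lambda>_::nat. G" "{1..M}"
    by (simp add: product_prob_space_def product_sigma_finite_def product_prob_space_axioms_def
        prob_G' prob_space_imp_sigma_finite)
  define f where "f i = (if i = j then g else if i = k then h else (\<lambda>_::real. 1::real))" for i
  have fi: "integrable G (f i)" for i
    using ig ih finite_measure.integrable_const[OF prob_space.finite_measure[OF prob_G']] by (auto simp: f_def)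
  have eq: "(\<Prod>i\<in>{1..M}. f i (x i)) = g (x j) * h (x k)" for x
  proof -
    have "(\<Prod>i\<in>{1..M}. f i (x i)) = (\<Prod>i\<in>{j,k}. f i (x i))"
      by (rule prod.mono_neutral_right) (use j k in \<open>auto simp: f_def\<close>)
    then show ?thesis using jk by (simp add: f_def)
  qed
  have eq2: "(\<Prod>i\<in>{1..M}. integral\<^sup>L G (f i)) = (\<integral>u. g u \<partial>G) * (\<integral>u. h u \<partial>G)"
  proof -
    have "(\<Prod>i\<in>{1..M}. integral\<^sup>L G (f i)) = (\<Prod>i\<in>{j,k}. integral\<^sup>L G (f i))"
      by (rule prod.mono_neutral_right) (use j k prob_space.prob_space[OF prob_G'] in \<open>auto simp: f_def\<close>)
    then show ?thesis using jk by (simp add: f_def)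
  qed
  show "integrable (gauss_iid M) (\<lambda>x. g (x j) * h (x k))"
    using P.product_integrable_prod[of "{1..M}" f] fi unfolding gauss_iid_def eq by simp
  show "(\<integral>x. g (x j) * h (x k) \<partial>gauss_iid M) = (\<integral>u. g u \<partial>G) * (\<integral>u. h u \<partial>G)"
    using P.product_integral_prod[of "{1..M}" f] fi unfolding gauss_iid_def eq eq2 by simp
qed



lemma comp_meas[measurable]: "j \<in> {1..M} \<Longrightarrow> (\<lambda>x. x j) \<in> borel_measurable (gauss_iid M)"
proof -
  assume j: "j \<in> {1..M}"
  have "(\<lambda>x. x j) \<in> measurable (gauss_iid M) G" unfolding gauss_iid_def using j by simp
  then show ?thesis by (simp add: measurable_cong_sets[OF refl sets_G])
qed

lemma fin_N: "finite_measure (gauss_iid M)" by (rule prob_space.finite_measure[OF prob_N])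
lemma fin_G: "finite_measure G" by (rule prob_space.finite_measure[OF prob_G'])

lemma exp_comp_int:
  assumes "j \<in> {1..M}"
  shows "integrable (gauss_iid M) (\<lambda>x. exp (l * x j))"
    and "(\<integral>x. exp (l * x j) \<partial>gauss_iid M) = exp (l\<^sup>2/2)"
  using marg[OF assms, of "\<lambda>u. exp (l * u)"] mgf_integrable mgf_integral by auto

lemma sum_exp_int:
  assumes "2 \<le> M"
  shows "integrable (gauss_iid M) (\<lambda>x. \<Sum>j=2..M. exp (l * x j))"
    and "(\<integral>x. (\<Sum>j=2..M. exp (l * x j)) \<partial>gauss_iid M) = (real M - 1) * exp (l\<^sup>2/2)"
proof -
  show "integrable (gauss_iid M) (\<lambda>x. \<Sum>j=2..M. exp (l * x j))"
    by (auto intro!: exp_comp_int)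
  have "(\<integral>x. (\<Sum>j=2..M. exp (l * x j)) \<partial>gauss_iid M) = (\<Sum>j=2..M. (\<integral>x. exp (l * x j) \<partial>gauss_iid M))"
    by (rule Bochner_Integration.integral_sum) (rule exp_comp_int, auto)
  also have "\<dots> = (\<Sum>j=2..M. exp (l\<^sup>2/2))"
    by (rule sum.cong) (auto intro: exp_comp_int)
  also have "\<dots> = (real M - 1) * exp (l\<^sup>2/2)" using assms by (simp add: of_nat_diff)
  finally show "(\<integral>x. (\<Sum>j=2..M. exp (l * x j)) \<partial>gauss_iid M) = (real M - 1) * exp (l\<^sup>2/2)" .
qed

definition FF :: "nat \<Rightarrow> real \<Rightarrow> (nat \<Rightarrow> real) \<Rightarrow> real" where
  "FF M a x = exp (a * x 1) / (exp (a * x 1) + exp (-(a\<^sup>2)) * (\<Sum>j=2..M. exp (a * x j)))"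

lemma FF_meas[measurable]: "2 \<le> M \<Longrightarrow> FF M a \<in> borel_measurable (gauss_iid M)"
  unfolding FF_def
  apply (intro borel_measurable_divide borel_measurable_add borel_measurable_times
      borel_measurable_sum borel_measurable_exp borel_measurable_const)
  by (auto intro!: borel_measurable_times borel_measurable_exp comp_meas)

lemma FF_bounds: "0 \<le> FF M a x" "FF M a x \<le> 1"
proof -
  have "0 \<le> exp (-(a\<^sup>2)) * (\<Sum>j=2..M. exp (a * x j))" by (intro mult_nonneg_nonneg sum_nonneg) auto
  moreover have "0 < exp (a * x 1)" by simp
  ultimately have "0 < exp (a * x 1) + exp (-(a\<^sup>2)) * (\<Sum>j=2..M. exp (a * x j))" by linarith
  with \<open>0 \<le> exp (-(a\<^sup>2)) * _\<close> show "0 \<le> FF M a x" "FF M a x \<le> 1" unfolding FF_def by (auto simp: divide_le_eq_1)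
qed

lemma FF_int: "2 \<le> M \<Longrightarrow> integrable (gauss_iid M) (FF M a)"
  by (rule finite_measure.integrable_const_bound[OF fin_N, where B=1]) (auto simp: FF_bounds abs_le_iff intro: order_trans[OF _ FF_bounds(1)])



lemma FF_pt1:
  assumes "0 < a"
  shows "1 - FF M a x \<le> exp (-(a\<^sup>2)) * exp (a*t) * (\<Sum>j=2..M. exp (a * x j)) + exp (-t) * exp ((-1) * x 1)"
proof -
  define S where "S = exp (-(a\<^sup>2)) * (\<Sum>j=2..M. exp (a * x j))"
  define X where "X = exp (a * x 1)"
  have S0: "0 \<le> S" unfolding S_def by (intro mult_nonneg_nonneg sum_nonneg) auto
  have X0: "0 < X" unfolding X_def by simp
  have eq: "1 - FF M a x = S / (X + S)"
    unfolding FF_def S_def[symmetric] X_def[symmetric] using S0 X0 by (simp add: field_simps)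
  have e0: "0 \<le> exp (-t) * exp ((-1) * x 1)" by simp
  have r: "exp (-(a\<^sup>2)) * exp (a*t) * (\<Sum>j=2..M. exp (a * x j)) = S * exp (a*t)" by (simp add: S_def)
  have s0: "0 \<le> S * exp (a*t)" using S0 by simp
  show ?thesis
  proof (cases "x 1 \<ge> -t")
    case True
    then have "exp (-(a*t)) \<le> X" unfolding X_def using assms by (simp add: mult_left_mono[of "-t" "x 1" a, simplified])
    then have "1 \<le> X * exp (a*t)" by (simp add: exp_minus field_simps)
    have "S / (X + S) \<le> S / X" using S0 X0 by (simp add: frac_le)
    also have "\<dots> \<le> S * exp (a*t)"
      using \<open>1 \<le> X * exp (a*t)\<close> S0 X0 by (simp add: divide_le_eq mult_left_mono[of 1 "X * exp (a*t)" S, simplified] mult_ac)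
    finally show ?thesis using eq e0 r by linarith
  next
    case False
    have "S / (X + S) \<le> 1" using S0 X0 by simp
    also have "1 \<le> exp (-t) * exp ((-1) * x 1)" using False by (simp add: exp_add[symmetric])
    finally show ?thesis using eq s0 r by linarith
  qed
qed

lemma core1:
  assumes M: "2 \<le> M" and a: "0 < a"
  shows "1 - (\<integral>x. FF M a x \<partial>gauss_iid M) \<le>
     exp (-(a\<^sup>2)) * exp (a*t) * ((real M - 1) * exp (a\<^sup>2/2)) + exp (-t) * exp (1/2)"
proof -
  have i1: "integrable (gauss_iid M) (\<lambda>x. exp (-(a\<^sup>2)) * exp (a*t) * (\<Sum>j=2..M. exp (a * x j)))"
    using sum_exp_int(1)[OF M] by simp
  have i2: "integrable (gauss_iid M) (\<lambda>x. exp (-t) * exp ((-1) * x 1))"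
    using exp_comp_int(1)[of 1 M "-1"] M by simp
  have "1 - (\<integral>x. FF M a x \<partial>gauss_iid M) = (\<integral>x. (1 - FF M a x) \<partial>gauss_iid M)"
    using Bochner_Integration.integral_diff[OF finite_measure.integrable_const[OF fin_N] FF_int[OF M], of 1 a]
      prob_space.prob_space[OF prob_N] by simp
  also have "\<dots> \<le> (\<integral>x. exp (-(a\<^sup>2)) * exp (a*t) * (\<Sum>j=2..M. exp (a * x j)) + exp (-t) * exp ((-1) * x 1) \<partial>gauss_iid M)"
    by (rule integral_mono) (use FF_int[OF M] i1 i2 FF_pt1[OF a] finite_measure.integrable_const[OF fin_N] in \<open>auto intro!: Bochner_Integration.integrable_diff\<close>)
  also have "\<dots> = exp (-(a\<^sup>2)) * exp (a*t) * ((real M - 1) * exp (a\<^sup>2/2)) + exp (-t) * exp (1/2)"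
    using i1 i2 sum_exp_int(2)[OF M, of a] exp_comp_int(2)[of 1 M "-1"] M by simp
  finally show ?thesis .
qed



definition YY :: "real \<Rightarrow> real \<Rightarrow> real" where
  "YY a u = (if u \<le> a + 2 then exp (a * u) else 0)"

lemma YY_meas[measurable]: "YY a \<in> borel_measurable borel"
  unfolding YY_def by measurable

lemma YY_meas_G[measurable]: "YY a \<in> borel_measurable G"
  by (simp add: measurable_cong_sets[OF sets_G refl])

lemma YY_nonneg: "0 \<le> YY a u" unfolding YY_def by auto

lemma YY_le_exp: "YY a u \<le> exp (a * u)" unfolding YY_def by auto

lemma YY_bound: "0 < a \<Longrightarrow> YY a u \<le> exp (a * (a + 2))"
  unfolding YY_def by auto

lemma YY_int: "0 < a \<Longrightarrow> integrable G (YY a)"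
  by (rule finite_measure.integrable_const_bound[OF fin_G, where B="exp (a * (a + 2))"])
     (auto simp: YY_nonneg YY_bound)

lemma YY2_int: "0 < a \<Longrightarrow> integrable G (\<lambda>u. (YY a u)\<^sup>2)"
  by (rule finite_measure.integrable_const_bound[OF fin_G, where B="(exp (a * (a + 2)))\<^sup>2"])
     (auto simp: YY_nonneg YY_bound power_mono)

lemma mu_lower:
  assumes a: "0 < a"
  shows "exp (a\<^sup>2/2) / 2 \<le> (\<integral>u. YY a u \<partial>G)"
proof -
  have pt: "exp (a * u) - exp (-2 * (a + 2)) * exp ((a + 2) * u) \<le> YY a u" for u
  proof (cases "u \<le> a + 2")
    case True then show ?thesis unfolding YY_def by simp
  next
    case False
    then have "a * u \<le> -2 * (a + 2) + (a + 2) * u" by (simp add: algebra_simps)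
    then have "exp (a * u) \<le> exp (-2 * (a + 2)) * exp ((a + 2) * u)" by (simp add: exp_add[symmetric])
    then show ?thesis using False unfolding YY_def by simp
  qed
  have "(\<integral>u. exp (a * u) - exp (-2 * (a + 2)) * exp ((a + 2) * u) \<partial>G)
      = exp (a\<^sup>2/2) - exp (-2 * (a + 2)) * exp ((a + 2)\<^sup>2/2)"
    using mgf_integrable mgf_integral by simp
  also have "exp (-2 * (a + 2)) * exp ((a + 2)\<^sup>2/2) = exp (a\<^sup>2/2) * exp (-2)"
    unfolding exp_add[symmetric] by (simp add: power2_eq_square algebra_simps)
  finally have eq: "(\<integral>u. exp (a * u) - exp (-2 * (a + 2)) * exp ((a + 2) * u) \<partial>G) = exp (a\<^sup>2/2) * (1 - exp (-2))"
    by (simp add: algebra_simps)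
  have "exp (-2::real) \<le> 1/2"
  proof -
    have "(2::real) \<le> 1 + 2" by simp
    also have "\<dots> \<le> exp 2" by (rule exp_ge_add_one_self)
    finally show ?thesis by (simp add: exp_minus field_simps)
  qed
  then have "exp (a\<^sup>2/2) / 2 \<le> exp (a\<^sup>2/2) * (1 - exp (-2))" by (simp add: field_simps)
  also have "\<dots> \<le> (\<integral>u. YY a u \<partial>G)"
    unfolding eq[symmetric]
    by (rule integral_mono) (use mgf_integrable YY_int[OF a] pt in auto)
  finally show ?thesis .
qed

lemma YY2_upper:
  assumes a: "0 < a"
  shows "(\<integral>u. (YY a u)\<^sup>2 \<partial>G) \<le> exp (a * (a + 2)) * exp (a\<^sup>2/2)"
proof -
  have pt: "(YY a u)\<^sup>2 \<le> exp (a * (a + 2)) * exp (a * u)" for u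
  proof (cases "u \<le> a + 2")
    case True
    then have "a * u \<le> a * (a + 2)" using a by (simp add: mult_left_mono)
    then have "exp (a * u) * exp (a * u) \<le> exp (a * (a + 2)) * exp (a * u)" by simp
    then show ?thesis using True unfolding YY_def by (simp add: power2_eq_square)
  qed (simp add: YY_def)
  have "(\<integral>u. (YY a u)\<^sup>2 \<partial>G) \<le> (\<integral>u. exp (a * (a + 2)) * exp (a * u) \<partial>G)"
    by (rule integral_mono) (use mgf_integrable YY2_int[OF a] pt in auto)
  also have "\<dots> = exp (a * (a + 2)) * exp (a\<^sup>2/2)" using mgf_integral by simp
  finally show ?thesis .
qed

lemma var_upper:
  assumes a: "0 < a"
  shows "(\<integral>u. (YY a u - (\<integral>v. YY a v \<partial>G))\<^sup>2 \<partial>G) \<le> (\<integral>u. (YY a u)\<^sup>2 \<partial>G)"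
  using prob_space.variance_eq[OF prob_G' YY_int[OF a] YY2_int[OF a]] by simp

lemma centered_zero:
  assumes a: "0 < a"
  shows "(\<integral>u. (YY a u - (\<integral>v. YY a v \<partial>G)) \<partial>G) = 0"
  using Bochner_Integration.integral_diff[OF YY_int[OF a] finite_measure.integrable_const[OF fin_G]]
    prob_space.prob_space[OF prob_G'] by simp



lemma cent_sq_int:
  assumes a: "0 < a"
  shows "integrable G (\<lambda>u. (YY a u - c)\<^sup>2)"
proof (rule finite_measure.integrable_const_bound[OF fin_G, where B="(exp (a * (a + 2)) + \<bar>c\<bar>)\<^sup>2"])
  have "(YY a u - c)\<^sup>2 \<le> (exp (a * (a + 2)) + \<bar>c\<bar>)\<^sup>2" for u
  proof -
    have "\<bar>YY a u - c\<bar> \<le> exp (a * (a + 2)) + \<bar>c\<bar>"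
      using YY_nonneg[of a u] YY_bound[OF a, of u] by linarith
    then have "\<bar>YY a u - c\<bar>\<^sup>2 \<le> (exp (a * (a + 2)) + \<bar>c\<bar>)\<^sup>2"
      by (rule power_mono) simp
    then show ?thesis by simp
  qed
  then show "AE x in G. norm ((YY a x - c)\<^sup>2) \<le> (exp (a * (a + 2)) + \<bar>c\<bar>)\<^sup>2" by simp
qed simp

lemma second_moment:
  assumes M: "2 \<le> M" and a: "0 < a"
  defines "\<mu> \<equiv> (\<integral>v. YY a v \<partial>G)"
  shows "integrable (gauss_iid M) (\<lambda>x. (\<Sum>j=2..M. (YY a (x j) - \<mu>))\<^sup>2)"
    and "(\<integral>x. (\<Sum>j=2..M. (YY a (x j) - \<mu>))\<^sup>2 \<partial>gauss_iid M) \<le> (real M - 1) * (\<integral>u. (YY a u)\<^sup>2 \<partial>G)"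
proof -
  have iYc: "integrable G (\<lambda>u. YY a u - \<mu>)"
    by (intro Bochner_Integration.integrable_diff YY_int[OF a] finite_measure.integrable_const[OF fin_G])
  define Z where "Z j x = YY a (x j) - \<mu>" for j :: nat and x :: "nat \<Rightarrow> real"
  have sq: "(\<Sum>j=2..M. (YY a (x j) - \<mu>))\<^sup>2 = (\<Sum>j=2..M. \<Sum>k=2..M. Z j x * Z k x)" for x
    unfolding power2_eq_square Z_def by (rule sum_product)
  have int: "integrable (gauss_iid M) (\<lambda>x. Z j x * Z k x)" if "j \<in> {2..M}" "k \<in> {2..M}" for j k
  proof (cases "j = k")
    case True
    have "integrable (gauss_iid M) (\<lambda>x. (YY a (x j) - \<mu>)\<^sup>2)"
      using marg(1)[of j M "\<lambda>u. (YY a u - \<mu>)\<^sup>2"] that cent_sq_int[OF a] by simp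
    then show ?thesis using True unfolding Z_def by (simp add: power2_eq_square)
  next
    case False
    then show ?thesis unfolding Z_def
      using pair(1)[of j M k "\<lambda>u. YY a u - \<mu>" "\<lambda>u. YY a u - \<mu>"] that iYc by auto
  qed
  have val: "(\<integral>x. Z j x * Z k x \<partial>gauss_iid M) = (if j = k then (\<integral>u. (YY a u - \<mu>)\<^sup>2 \<partial>G) else 0)"
    if "j \<in> {2..M}" "k \<in> {2..M}" for j k
  proof (cases "j = k")
    case True
    have "(\<integral>x. (YY a (x j) - \<mu>)\<^sup>2 \<partial>gauss_iid M) = (\<integral>u. (YY a u - \<mu>)\<^sup>2 \<partial>G)"
      using marg(2)[of j M "\<lambda>u. (YY a u - \<mu>)\<^sup>2"] that by simp
    then show ?thesis using True unfolding Z_def by (simp add: power2_eq_square)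
  next
    case False
    then have "(\<integral>x. Z j x * Z k x \<partial>gauss_iid M) = (\<integral>u. YY a u - \<mu> \<partial>G) * (\<integral>u. YY a u - \<mu> \<partial>G)"
      unfolding Z_def
      using pair(2)[of j M k "\<lambda>u. YY a u - \<mu>" "\<lambda>u. YY a u - \<mu>"] that iYc by auto
    then show ?thesis using False centered_zero[OF a] unfolding \<mu>_def by simp
  qed
  show "integrable (gauss_iid M) (\<lambda>x. (\<Sum>j=2..M. (YY a (x j) - \<mu>))\<^sup>2)"
    unfolding sq by (rule Bochner_Integration.integrable_sum, rule Bochner_Integration.integrable_sum, rule int) auto
  have "(\<integral>x. (\<Sum>j=2..M. (YY a (x j) - \<mu>))\<^sup>2 \<partial>gauss_iid M)
      = (\<Sum>j=2..M. \<Sum>k=2..M. (\<integral>x. Z j x * Z k x \<partial>gauss_iid M))"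
    unfolding sq
    apply (subst Bochner_Integration.integral_sum)
     apply (use int in auto)[1]
    apply (rule sum.cong[OF refl])
    apply (subst Bochner_Integration.integral_sum)
     apply (use int in auto)
    done
  also have "\<dots> = (\<Sum>j=2..M. (\<integral>u. (YY a u - \<mu>)\<^sup>2 \<partial>G))"
    by (rule sum.cong[OF refl]) (simp add: val)
  also have "\<dots> = (real M - 1) * (\<integral>u. (YY a u - \<mu>)\<^sup>2 \<partial>G)"
    using M by (simp add: of_nat_diff)
  also have "\<dots> \<le> (real M - 1) * (\<integral>u. (YY a u)\<^sup>2 \<partial>G)"
    using M var_upper[OF a] unfolding \<mu>_def by (intro mult_left_mono) auto
  finally show "(\<integral>x. (\<Sum>j=2..M. (YY a (x j) - \<mu>))\<^sup>2 \<partial>gauss_iid M) \<le> (real M - 1) * (\<integral>u. (YY a u)\<^sup>2 \<partial>G)" .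
qed



lemma FF_pt2:
  assumes a: "0 < a" and m: "0 < m" and mdef: "m = (real M - 1) * \<mu>" and M: "2 \<le> M"
  shows "FF M a x \<le> 4 * (\<Sum>j=2..M. (YY a (x j) - \<mu>))\<^sup>2 / m\<^sup>2 + exp (-t) * exp (1 * x 1)
           + 2 * exp (a*t) / (exp (-(a\<^sup>2)) * m)"
proof -
  define SY where "SY = (\<Sum>j=2..M. YY a (x j))"
  define S where "S = (\<Sum>j=2..M. exp (a * x j))"
  define X where "X = exp (a * x 1)"
  define w where "w = exp (-(a\<^sup>2))"
  have w0: "0 < w" unfolding w_def by simp
  have X0: "0 < X" unfolding X_def by simp
  have SYS: "SY \<le> S" unfolding SY_def S_def by (rule sum_mono) (rule YY_le_exp)
  have SY0: "0 \<le> SY" unfolding SY_def by (rule sum_nonneg) (rule YY_nonneg)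
  have diff: "(\<Sum>j=2..M. (YY a (x j) - \<mu>)) = SY - m"
    unfolding SY_def mdef sum_subtractf using M by (simp add: of_nat_diff)
  have F: "FF M a x = X / (X + w * S)" unfolding FF_def X_def w_def S_def ..
  have F1: "FF M a x \<le> 1" "0 \<le> FF M a x" by (rule FF_bounds)+
  have T1: "0 \<le> 4 * (\<Sum>j=2..M. (YY a (x j) - \<mu>))\<^sup>2 / m\<^sup>2" by simp
  have T2: "0 \<le> exp (-t) * exp (1 * x 1)" by simp
  have T3: "0 \<le> 2 * exp (a*t) / (exp (-(a\<^sup>2)) * m)" using m by simp
  show ?thesis
  proof (cases "SY < m / 2")
    case True
    then have "m / 2 \<le> \<bar>SY - m\<bar>" using SY0 by linarith
    then have "(m/2)\<^sup>2 \<le> \<bar>SY - m\<bar>\<^sup>2" by (rule power_mono) (use m in simp)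
    then have "m\<^sup>2 \<le> 4 * (SY - m)\<^sup>2" by (simp add: power2_eq_square field_simps)
    then have "1 \<le> 4 * (SY - m)\<^sup>2 / m\<^sup>2" using m by (simp add: field_simps)
    then show ?thesis unfolding diff using F1 T2 T3 by linarith
  next
    case False
    note SYm = this
    show ?thesis
    proof (cases "x 1 > t")
      case True
      then have "1 \<le> exp (-t) * exp (1 * x 1)" by (simp add: exp_add[symmetric])
      then show ?thesis using F1 T1 T3 by linarith
    next
      case False
      then have "X \<le> exp (a * t)" unfolding X_def using a by (simp add: mult_left_mono)
      have S2: "m / 2 \<le> S" using SYm SYS by linarith
      have wS: "0 < w * (m / 2)" using w0 m by simp
      have wS2: "0 < w * S" using w0 m S2 by simp
      have XwS: "0 < X + w * S" using X0 wS2 by linarith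
      have "X / (X + w * S) \<le> X / (w * S)"
        using X0 wS2 XwS by (intro divide_left_mono) auto
      also have "\<dots> \<le> exp (a * t) / (w * (m / 2))"
        using X0 w0 S2 m \<open>X \<le> exp (a * t)\<close>
        by (intro frac_le) (auto intro!: mult_left_mono)
      also have "\<dots> = 2 * exp (a*t) / (exp (-(a\<^sup>2)) * m)" unfolding w_def by (simp add: field_simps)
      finally show ?thesis using F T1 T2 by linarith
    qed
  qed
qed



lemma core2a:
  assumes M: "2 \<le> M" and a: "0 < a"
  defines "\<mu> \<equiv> (\<integral>v. YY a v \<partial>G)"
  defines "m \<equiv> (real M - 1) * \<mu>"
  shows "(\<integral>x. FF M a x \<partial>gauss_iid M) \<le> 4 * ((real M - 1) * (\<integral>u. (YY a u)\<^sup>2 \<partial>G)) / m\<^sup>2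
      + exp (-t) * exp (1/2) + 2 * exp (a*t) / (exp (-(a\<^sup>2)) * m)"
proof -
  have mu0: "0 < \<mu>" using mu_lower[OF a] unfolding \<mu>_def
    by (metis exp_gt_zero half_gt_zero order_less_le_trans)
  have m0: "0 < m" unfolding m_def using M mu0 by simp
  have i1: "integrable (gauss_iid M) (\<lambda>x. 4 * (\<Sum>j=2..M. (YY a (x j) - \<mu>))\<^sup>2 / m\<^sup>2)"
    by (intro integrable_divide_zero integrable_mult_right) (use second_moment(1)[OF M a] in \<open>simp add: \<mu>_def\<close>)
  have i2: "integrable (gauss_iid M) (\<lambda>x. exp (-t) * exp (1 * x 1))"
    using exp_comp_int(1)[of 1 M 1] M by simp
  have i3: "integrable (gauss_iid M) (\<lambda>x. 2 * exp (a*t) / (exp (-(a\<^sup>2)) * m))"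
    by (rule finite_measure.integrable_const[OF fin_N])
  have "(\<integral>x. FF M a x \<partial>gauss_iid M) \<le> (\<integral>x. 4 * (\<Sum>j=2..M. (YY a (x j) - \<mu>))\<^sup>2 / m\<^sup>2
        + exp (-t) * exp (1 * x 1) + 2 * exp (a*t) / (exp (-(a\<^sup>2)) * m) \<partial>gauss_iid M)"
    by (rule integral_mono[OF FF_int[OF M] Bochner_Integration.integrable_add[OF Bochner_Integration.integrable_add[OF i1 i2] i3]])
      (rule FF_pt2[OF a m0 m_def[THEN meta_eq_to_obj_eq] M])
  also have "\<dots> = 4 * (\<integral>x. (\<Sum>j=2..M. (YY a (x j) - \<mu>))\<^sup>2 \<partial>gauss_iid M) / m\<^sup>2
        + exp (-t) * exp (1/2) + 2 * exp (a*t) / (exp (-(a\<^sup>2)) * m)"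
    apply (subst Bochner_Integration.integral_add[OF Bochner_Integration.integrable_add[OF i1 i2] i3])
    apply (subst Bochner_Integration.integral_add[OF i1 i2])
    apply (subst integral_divide_zero, subst integral_mult_right_zero)
    apply (subst integral_mult_right_zero)
    apply (subst exp_comp_int(2)[of 1 M 1])
    using M apply simp
    apply (subst lebesgue_integral_const)
    using prob_space.prob_space[OF prob_N, of M] apply simp
    done
  also have "\<dots> \<le> 4 * ((real M - 1) * (\<integral>u. (YY a u)\<^sup>2 \<partial>G)) / m\<^sup>2
        + exp (-t) * exp (1/2) + 2 * exp (a*t) / (exp (-(a\<^sup>2)) * m)"
    using second_moment(2)[OF M a] m0 unfolding \<mu>_def by (simp add: divide_right_mono)
  finally show ?thesis .
qed



lemma termA:
  fixes Mm1 \<mu> V a L :: real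
  assumes Mm: "exp L / 2 \<le> Mm1" and mu: "exp (a\<^sup>2/2) / 2 \<le> \<mu>"
    and V0: "0 \<le> V" and V: "V \<le> exp (a * (a + 2)) * exp (a\<^sup>2/2)"
  shows "4 * (Mm1 * V) / (Mm1 * \<mu>)\<^sup>2 \<le> 32 * exp (a\<^sup>2/2 + 2*a - L)"
proof -
  have Mp: "0 < Mm1" using Mm exp_gt_zero[of L] by linarith
  have mp: "0 < \<mu>" using mu exp_gt_zero[of "a\<^sup>2/2"] by linarith
  have mu2: "exp (a\<^sup>2) / 4 \<le> \<mu>\<^sup>2"
  proof -
    have "(exp (a\<^sup>2/2) / 2)\<^sup>2 \<le> \<mu>\<^sup>2" by (rule power_mono[OF mu]) simp
    moreover have "(exp (a\<^sup>2/2) / 2)\<^sup>2 = exp (a\<^sup>2) / 4"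
      by (simp add: power2_eq_square exp_add[symmetric])
    ultimately show ?thesis by simp
  qed
  have den: "exp (L + a\<^sup>2) / 8 \<le> Mm1 * \<mu>\<^sup>2"
  proof -
    have "exp L / 2 * (exp (a\<^sup>2) / 4) \<le> Mm1 * \<mu>\<^sup>2"
      by (rule mult_mono[OF Mm mu2]) (use Mp in auto)
    then show ?thesis by (simp add: exp_add)
  qed
  have "4 * (Mm1 * V) / (Mm1 * \<mu>)\<^sup>2 = 4 * V / (Mm1 * \<mu>\<^sup>2)"
    using Mp mp by (simp add: power2_eq_square field_simps)
  also have "\<dots> \<le> 4 * V / (exp (L + a\<^sup>2) / 8)"
    by (rule divide_left_mono[OF den]) (use V0 Mp mp in auto)
  also have "\<dots> = 32 * V / exp (L + a\<^sup>2)" by simp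
  also have "\<dots> \<le> 32 * (exp (a * (a + 2)) * exp (a\<^sup>2/2)) / exp (L + a\<^sup>2)"
    by (rule divide_right_mono) (use V in auto)
  also have "\<dots> = 32 * exp (a\<^sup>2/2 + 2*a - L)"
  proof -
    have "exp (a * (a + 2)) * exp (a\<^sup>2/2) = exp (a\<^sup>2/2 + 2*a - L) * exp (L + a\<^sup>2)"
      unfolding exp_add[symmetric] by (simp add: power2_eq_square algebra_simps)
    then show ?thesis by simp
  qed
  finally show ?thesis .
qed

lemma termC:
  fixes Mm1 \<mu> a L t :: real
  assumes Mm: "exp L / 2 \<le> Mm1" and mu: "exp (a\<^sup>2/2) / 2 \<le> \<mu>"
  shows "2 * exp (a*t) / (exp (-(a\<^sup>2)) * (Mm1 * \<mu>)) \<le> 8 * exp (a*t + a\<^sup>2/2 - L)"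
proof -
  have Mp: "0 < Mm1" using Mm exp_gt_zero[of L] by linarith
  have mp: "0 < \<mu>" using mu exp_gt_zero[of "a\<^sup>2/2"] by linarith
  have "exp (L) / 2 * (exp (a\<^sup>2/2) / 2) \<le> Mm1 * \<mu>"
    by (rule mult_mono[OF Mm mu]) (use Mp in auto)
  then have den: "exp (-(a\<^sup>2)) * (exp L / 2 * (exp (a\<^sup>2/2) / 2)) \<le> exp (-(a\<^sup>2)) * (Mm1 * \<mu>)"
    by simp
  have "2 * exp (a*t) / (exp (-(a\<^sup>2)) * (Mm1 * \<mu>)) \<le> 2 * exp (a*t) / (exp (-(a\<^sup>2)) * (exp L / 2 * (exp (a\<^sup>2/2) / 2)))"
    using Mp mp by (intro divide_left_mono[OF den]) (auto intro!: mult_pos_pos)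
  also have "\<dots> = 8 * exp (a*t + a\<^sup>2/2 - L)"
  proof -
    have "exp (a*t) = exp (a*t + a\<^sup>2/2 - L) * (exp (-(a\<^sup>2)) * (exp L * exp (a\<^sup>2/2)))"
      unfolding exp_add[symmetric] by (simp add: power2_eq_square algebra_simps)
    then show ?thesis by (simp add: field_simps)
  qed
  finally show ?thesis .
qed

lemma quad_bound:
  fixes kk bb ss :: real assumes "0 < kk"
  shows "-2*kk* ss\<^sup>2 + bb* ss \<le> -kk* ss\<^sup>2 + bb\<^sup>2/(4*kk)"
proof -
  have "0 \<le> kk * (ss - bb/(2*kk))\<^sup>2" using assms by simp
  also have "kk * (ss - bb/(2*kk))\<^sup>2 = kk* ss\<^sup>2 - bb* ss + bb\<^sup>2/(4*kk)"
    using assms by (simp add: power2_eq_square field_simps)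
  finally show ?thesis by simp
qed

lemma exp_neg_lim:
  fixes g :: "'a \<Rightarrow> real"
  assumes k: "0 < k" and g: "filterlim g at_top F"
  shows "((\<lambda>x. C * exp (- k * g x)) \<longlongrightarrow> 0) F"
proof -
  have "filterlim (\<lambda>x. (-k) * g x) at_bot F"
    by (rule filterlim_tendsto_neg_mult_at_bot[OF tendsto_const _ g]) (use k in simp)
  then have "((\<lambda>x. exp (-k * g x)) \<longlongrightarrow> 0) F"
    by (rule filterlim_compose[OF exp_at_bot])
  then show ?thesis using tendsto_mult_right_zero by blast
qed

lemma ln_seq: "filterlim (\<lambda>M. ln (real M)) at_top sequentially"
  using filterlim_compose filterlim_real_sequentially ln_at_top by blast

lemma sqrt_ln_seq: "filterlim (\<lambda>M. sqrt (ln (real M))) at_top sequentially"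
  using filterlim_compose[OF sqrt_at_top ln_seq] .



lemma setup_M:
  fixes R q :: real
  assumes R: "R > 0" and q: "q > 0" and M: "2 \<le> M"
  defines "L \<equiv> ln (real M)"
  defines "a \<equiv> 1 / sqrt (R / (q * L))"
  shows "0 < L" "0 < a" "a\<^sup>2 = (q/R) * L" "a = sqrt (q/R) * sqrt L"
    "sparc_E M (R / (q * ln (real M))) = (\<integral>x. FF M a x \<partial>gauss_iid M)"
    "exp L / 2 \<le> real M - 1" "real M - 1 \<le> exp L"
proof -
  have M0: "0 < real M" using M by simp
  show L0: "0 < L" unfolding L_def using M by simp
  have tau: "0 < R / (q * L)" using R q L0 by simp
  show "0 < a" unfolding a_def using tau by simp
  show a2: "a\<^sup>2 = (q/R) * L" unfolding a_def using tau R q L0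
    by (simp add: power_divide real_sqrt_pow2 field_simps)
  show "a = sqrt (q/R) * sqrt L" unfolding a_def using R q L0
    by (simp add: real_sqrt_divide real_sqrt_mult field_simps)
  have eL: "exp L = real M" unfolding L_def using M0 by simp
  show "exp L / 2 \<le> real M - 1" "real M - 1 \<le> exp L" using eL M by auto
  have e1: "x / sqrt (R / (q * L)) = a * x" for x unfolding a_def by simp
  have e2: "- 1 / (R / (q * L)) = - (a\<^sup>2)" using a2 R q by (simp add: field_simps)
  show "sparc_E M (R / (q * ln (real M))) = (\<integral>x. FF M a x \<partial>gauss_iid M)"
    unfolding sparc_E_def FF_def L_def[symmetric] e1 e2 ..
qed



lemma E_le1: "2 \<le> M \<Longrightarrow> (\<integral>x. FF M a x \<partial>gauss_iid M) \<le> 1"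
  using integral_mono[OF FF_int finite_measure.integrable_const[OF fin_N], of M a 1]
    FF_bounds(2) prob_space.prob_space[OF prob_N, of M] by simp

lemma E_ge0: "0 \<le> (\<integral>x. FF M a x \<partial>gauss_iid M)"
  by (rule integral_nonneg_AE) (simp add: FF_bounds)

lemma case1_M:
  fixes R q :: real
  assumes R: "R > 0" and q: "q > 0" and qR: "q > 2 * R" and M: "2 \<le> M"
  defines "c \<equiv> q / R"
  defines "d \<equiv> (c/2 - 1) / (2*c)"
  shows "1 - sparc_E M (R / (q * ln (real M))) \<le>
     exp (- ((c/2 - 1)/2) * ln (real M)) + exp (1/2) * exp (- (d * sqrt c) * sqrt (ln (real M)))"
proof -
  define L where "L = ln (real M)"
  define a where "a = 1 / sqrt (R / (q * L))"
  note S = setup_M[OF R q M, folded L_def, folded a_def, folded c_def]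
  have S5: "sparc_E M (R / (q * ln (real M))) = (\<integral>x. FF M a x \<partial>gauss_iid M)"
    using setup_M(5)[OF R q M] unfolding a_def L_def by simp
  have c0: "0 < c" unfolding c_def using R q by simp
  have c2: "c > 2" unfolding c_def using R qR by (simp add: field_simps)
  have E1: "1 - sparc_E M (R / (q * ln (real M))) \<le>
     exp (-(a\<^sup>2)) * exp (a*(d*a)) * ((real M - 1) * exp (a\<^sup>2/2)) + exp (-(d*a)) * exp (1/2)"
    unfolding S5 by (rule core1[OF M S(2)])
  have E2: "exp (-(a\<^sup>2)) * exp (a*(d*a)) * ((real M - 1) * exp (a\<^sup>2/2))
        \<le> exp (-(a\<^sup>2)) * exp (a*(d*a)) * (exp L * exp (a\<^sup>2/2))"
    using S(7) by (intro mult_left_mono mult_right_mono) auto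
  have E3: "exp (-(a\<^sup>2)) * exp (a*(d*a)) * (exp L * exp (a\<^sup>2/2)) = exp (- ((c/2 - 1)/2) * L)"
  proof -
    have aa: "a\<^sup>2 = c * L" using S(3) by simp
    have "-(a\<^sup>2) + a*(d*a) + (L + a\<^sup>2/2) = -(a\<^sup>2) + d*a\<^sup>2 + (L + a\<^sup>2/2)"
      by (simp add: power2_eq_square)
    also have "\<dots> = -(c*L) + d*(c*L) + (L + (c*L)/2)" unfolding aa ..
    also have "\<dots> = - ((c/2 - 1)/2) * L"
      using c0 unfolding d_def by (simp add: field_simps)
    finally have "-(a\<^sup>2) + a*(d*a) + (L + a\<^sup>2/2) = - ((c/2 - 1)/2) * L" .
    then show ?thesis by (simp add: exp_add[symmetric])
  qed
  have E4: "exp (-(d*a)) * exp (1/2) = exp (1/2) * exp (- (d * sqrt c) * sqrt L)"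
    using S(4) by (simp add: mult_ac)
  show ?thesis using E1 E2 E3 E4 unfolding L_def by linarith
qed

lemma case2_M:
  fixes R q :: real
  assumes R: "R > 0" and q: "q > 0" and qR: "q < 2 * R" and M: "2 \<le> M"
  defines "c \<equiv> q / R"
  defines "d \<equiv> (1 - c/2) / (2*c)"
  defines "k \<equiv> (1 - c/2) / 2"
  shows "sparc_E M (R / (q * ln (real M))) \<le>
     32 * exp ((2 * sqrt c)\<^sup>2 / (4 * k)) * exp (- k * ln (real M))
     + exp (1/2) * exp (- (d * sqrt c) * sqrt (ln (real M)))
     + 8 * exp (- k * ln (real M))"
proof -
  define L where "L = ln (real M)"
  define a where "a = 1 / sqrt (R / (q * L))"
  note S = setup_M[OF R q M, folded L_def, folded a_def, folded c_def]
  have S5: "sparc_E M (R / (q * ln (real M))) = (\<integral>x. FF M a x \<partial>gauss_iid M)"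
    using setup_M(5)[OF R q M] unfolding a_def L_def by simp
  have c0: "0 < c" unfolding c_def using R q by simp
  have c2: "c < 2" unfolding c_def using R qR by (simp add: field_simps)
  have k0: "0 < k" unfolding k_def using c2 by simp
  have a0: "0 < a" by (rule S(2))
  define \<mu> where "\<mu> = (\<integral>v. YY a v \<partial>G)"
  define V where "V = (\<integral>u. (YY a u)\<^sup>2 \<partial>G)"
  have V0: "0 \<le> V" unfolding V_def by (rule integral_nonneg_AE) simp
  have E: "sparc_E M (R / (q * ln (real M))) \<le> 4 * ((real M - 1) * V) / ((real M - 1) * \<mu>)\<^sup>2
      + exp (-(d*a)) * exp (1/2) + 2 * exp (a*(d*a)) / (exp (-(a\<^sup>2)) * ((real M - 1) * \<mu>))"
    unfolding S5 V_def \<mu>_def by (rule core2a[OF M a0])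
  have A: "4 * ((real M - 1) * V) / ((real M - 1) * \<mu>)\<^sup>2 \<le> 32 * exp (a\<^sup>2/2 + 2*a - L)"
    by (rule termA[OF S(6)]) (use mu_lower[OF a0] YY2_upper[OF a0] V0 in \<open>auto simp: \<mu>_def V_def\<close>)
  have A2: "a\<^sup>2/2 + 2*a - L \<le> -k * L + (2 * sqrt c)\<^sup>2 / (4 * k)"
  proof -
    have sL: "(sqrt L)\<^sup>2 = L" using S(1) by simp
    have "a\<^sup>2/2 + 2*a - L = -2*k*(sqrt L)\<^sup>2 + (2 * sqrt c) * sqrt L"
      unfolding sL using S(3) S(4) unfolding k_def by (simp add: field_simps)
    also have "\<dots> \<le> -k*(sqrt L)\<^sup>2 + (2 * sqrt c)\<^sup>2 / (4 * k)" by (rule quad_bound[OF k0])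
    finally show ?thesis unfolding sL .
  qed
  have A3: "32 * exp (a\<^sup>2/2 + 2*a - L) \<le> 32 * exp ((2 * sqrt c)\<^sup>2 / (4 * k)) * exp (- k * L)"
    using A2 by (simp add: exp_add[symmetric] add.commute)
  have C: "2 * exp (a*(d*a)) / (exp (-(a\<^sup>2)) * ((real M - 1) * \<mu>)) \<le> 8 * exp (a*(d*a) + a\<^sup>2/2 - L)"
    by (rule termC[OF S(6)]) (use mu_lower[OF a0] in \<open>simp add: \<mu>_def\<close>)
  have C2: "a*(d*a) + a\<^sup>2/2 - L = - k * L"
  proof -
    have aa: "a\<^sup>2 = c * L" using S(3) by simp
    have "a*(d*a) + a\<^sup>2/2 - L = d*a\<^sup>2 + a\<^sup>2/2 - L" by (simp add: power2_eq_square)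
    also have "\<dots> = d*(c*L) + (c*L)/2 - L" unfolding aa ..
    also have "\<dots> = - k * L" using c0 unfolding d_def k_def by (simp add: field_simps)
    finally show ?thesis .
  qed
  have B: "exp (-(d*a)) * exp (1/2) = exp (1/2) * exp (- (d * sqrt c) * sqrt L)"
    using S(4) by (simp add: mult_ac)
  have C3: "2 * exp (a*(d*a)) / (exp (-(a\<^sup>2)) * ((real M - 1) * \<mu>)) \<le> 8 * exp (- k * L)"
    using C unfolding C2 .
  show ?thesis using E A A3 C3 B unfolding L_def by linarith
qed



theorem mainTheorem7:
  fixes R q :: real
  assumes "R > 0" and "q > 0"
  shows "(q > 2 * R \<longrightarrow> ((\<lambda>M. sparc_E M (R / (q * ln (real M)))) \<longlonglongrightarrow> 1))
       \<and> (q < 2 * R \<longrightarrow> ((\<lambda>M. sparc_E M (R / (q * ln (real M)))) \<longlonglongrightarrow> 0))"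
proof (intro conjI impI)
  define c where "c = q / R"
  have c0: "0 < c" unfolding c_def using assms by simp
  have ev2: "eventually (\<lambda>M. 2 \<le> M) sequentially" by (rule eventually_ge_at_top)
  {
    assume qR: "q > 2 * R"
    have c2: "c > 2" unfolding c_def using assms qR by (simp add: field_simps)
    define d where "d = (c/2 - 1) / (2*c)"
    have d0: "0 < d * sqrt c" unfolding d_def using c2 by simp
    have k0: "0 < (c/2 - 1)/2" using c2 by simp
    have l1: "(\<lambda>M. 1 * exp (- ((c/2 - 1)/2) * ln (real M))) \<longlonglongrightarrow> 0"
      by (rule exp_neg_lim[OF k0 ln_seq])
    have l2: "(\<lambda>M. exp (1/2) * exp (- (d * sqrt c) * sqrt (ln (real M)))) \<longlonglongrightarrow> 0"
      by (rule exp_neg_lim[OF d0 sqrt_ln_seq])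
    have lB: "(\<lambda>M. 1 - (exp (- ((c/2 - 1)/2) * ln (real M)) + exp (1/2) * exp (- (d * sqrt c) * sqrt (ln (real M))))) \<longlonglongrightarrow> 1"
      using tendsto_diff[OF tendsto_const[of 1] tendsto_add[OF l1 l2]] by simp
    show "(\<lambda>M. sparc_E M (R / (q * ln (real M)))) \<longlonglongrightarrow> 1"
    proof (rule tendsto_sandwich[OF _ _ lB tendsto_const])
      show "\<forall>\<^sub>F M in sequentially. 1 - (exp (- ((c/2 - 1)/2) * ln (real M)) + exp (1/2) * exp (- (d * sqrt c) * sqrt (ln (real M))))
          \<le> sparc_E M (R / (q * ln (real M)))"
        using ev2 by eventually_elim (use case1_M[OF assms qR] in \<open>fastforce simp: c_def d_def\<close>)
      show "\<forall>\<^sub>F M in sequentially. sparc_E M (R / (q * ln (real M))) \<le> 1"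
        using ev2 by eventually_elim (simp add: setup_M(5)[OF assms] E_le1)
    qed
  }
  {
    assume qR: "q < 2 * R"
    have c2: "c < 2" unfolding c_def using assms qR by (simp add: field_simps)
    define d where "d = (1 - c/2) / (2*c)"
    define k where "k = (1 - c/2) / 2"
    have d0: "0 < d * sqrt c" unfolding d_def using c2 c0 by simp
    have k0: "0 < k" unfolding k_def using c2 by simp
    have l1: "(\<lambda>M. (32 * exp ((2 * sqrt c)\<^sup>2 / (4 * k))) * exp (- k * ln (real M))) \<longlonglongrightarrow> 0"
      by (rule exp_neg_lim[OF k0 ln_seq])
    have l2: "(\<lambda>M. exp (1/2) * exp (- (d * sqrt c) * sqrt (ln (real M)))) \<longlonglongrightarrow> 0"
      by (rule exp_neg_lim[OF d0 sqrt_ln_seq])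
    have l3: "(\<lambda>M. 8 * exp (- k * ln (real M))) \<longlonglongrightarrow> 0"
      by (rule exp_neg_lim[OF k0 ln_seq])
    have lB: "(\<lambda>M. 32 * exp ((2 * sqrt c)\<^sup>2 / (4 * k)) * exp (- k * ln (real M))
     + exp (1/2) * exp (- (d * sqrt c) * sqrt (ln (real M)))
     + 8 * exp (- k * ln (real M))) \<longlonglongrightarrow> 0"
      using tendsto_add[OF tendsto_add[OF l1 l2] l3] by simp
    show "(\<lambda>M. sparc_E M (R / (q * ln (real M)))) \<longlonglongrightarrow> 0"
    proof (rule tendsto_sandwich[OF _ _ tendsto_const lB])
      show "\<forall>\<^sub>F M in sequentially. 0 \<le> sparc_E M (R / (q * ln (real M)))"
        using ev2 by eventually_elim (simp add: setup_M(5)[OF assms] E_ge0)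
      show "\<forall>\<^sub>F M in sequentially. sparc_E M (R / (q * ln (real M))) \<le> 32 * exp ((2 * sqrt c)\<^sup>2 / (4 * k)) * exp (- k * ln (real M))
     + exp (1/2) * exp (- (d * sqrt c) * sqrt (ln (real M)))
     + 8 * exp (- k * ln (real M))"
        using ev2 by eventually_elim (use case2_M[OF assms qR] in \<open>simp add: c_def d_def k_def\<close>)
    qed
  }
qed


end
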